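(* Let $v,w\in\mathbb{R}^n\setminus\{0\}$ and $A\in\mathrm{GL}_n(\mathbb{R})$ satisfy $A\circ Q_v=Q_w\circ(A,A)$, i.e. $A(Q_v(\xi,\eta))=Q_w(A\xi,A\eta)$ for all $\xi,\eta\in\mathbb{R}^n$. Then $A=cT$ for some $c>0$ and $T\in O(n)$.
   Context: For $v\in\mathbb{R}^n$, $Q_v:\mathbb{R}^n\times\mathbb{R}^n\to\mathbb{R}^n$ is the symmetric bilinear map $Q_v(\xi,\eta)=\langle\xi,\eta\rangle v-\langle\xi,v\rangle\eta-\langle\eta,v\rangle\xi$, where $\langle\cdot,\cdot\rangle$ is the Euclidean inner product. $O(n)$ is the orthogonal group. *)

theory Defs
  imports "HOL-Analysis.Analysis"
begin

definition Qmap :: "real^'n \<Rightarrow> real^'n \<Rightarrow> real^'n \<Rightarrow> real^'n" where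
  "Qmap v xi eta = (xi \<bullet> eta) *\<^sub>R v - (xi \<bullet> v) *\<^sub>R eta - (eta \<bullet> v) *\<^sub>R xi"

end

theory Submission
  imports Defs
begin

lemma dotT: "((A::real^'n^'n) *v x) \<bullet> y = x \<bullet> (y v* A)"
  by (metis dot_lmul_matrix inner_commute)

lemma norm_scale_orth:
  fixes A :: "real^'n^'n"
  assumes mu: "mu > 0" and N: "\<And>x. (A *v x) \<bullet> (A *v x) = mu * (x \<bullet> x)"
  shows "\<exists>c T. c > 0 \<and> orthogonal_matrix T \<and> A = c *\<^sub>R T"
proof -
  define T where "T = (1 / sqrt mu) *\<^sub>R A"
  have "orthogonal_transformation ((*v) T)"
    unfolding orthogonal_transformation
  proof (intro conjI allI)
    show "linear ((*v) T)" by simp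
    fix x
    have Tx: "T *v x = (1/sqrt mu) *\<^sub>R (A *v x)"
      by (metis T_def matrix_scaleR_vector_ac matrix_vector_mult_scaleR)
    have "(T *v x) \<bullet> (T *v x) = (1/sqrt mu)^2 * ((A *v x) \<bullet> (A *v x))"
      by (simp add: Tx power2_eq_square)
    also have "\<dots> = x \<bullet> x" using mu N by (simp add: power_divide)
    finally show "norm (T *v x) = norm x" by (simp add: norm_eq_sqrt_inner)
  qed
  hence "orthogonal_matrix T"
    using orthogonal_transformation_matrix matrix_of_matrix_vector_mul by metis
  moreover have "A = sqrt mu *\<^sub>R T" using mu by (simp add: T_def)
  ultimately show ?thesis using mu by (intro exI[of _ "sqrt mu"] exI[of _ T]) auto
qed

lemma solve_sc:
  fixes a w :: "'a::real_vector"
  assumes "c \<noteq> 0" "c *\<^sub>R a = b *\<^sub>R w"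
  shows "a = (b / c) *\<^sub>R w"
proof -
  have "a = (1/c) *\<^sub>R (c *\<^sub>R a)" using assms(1) by simp
  also have "\<dots> = (b / c) *\<^sub>R w" using assms(2) by simp
  finally show ?thesis .
qed

theorem lemma3p2:
  fixes v w :: "real^'n" and A :: "real^'n^'n"
  assumes "v \<noteq> 0" and "w \<noteq> 0" and "invertible A"
    and "\<And>xi eta. A *v Qmap v xi eta = Qmap w (A *v xi) (A *v eta)"
  shows "\<exists>c T. c > 0 \<and> orthogonal_matrix T \<and> A = c *\<^sub>R T"
proof -
  note inj = inj_matrix_vector_mult[OF assms(3)]
  have inj0: "\<And>x. A *v x = 0 \<Longrightarrow> x = 0" using inj vec.inj_iff_eq_0 by blast
  define d where "d = v - w v* A"
  have H: "(xi \<bullet> eta) *\<^sub>R (A *v v) - ((A *v xi) \<bullet> (A *v eta)) *\<^sub>R w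
      = (xi \<bullet> d) *\<^sub>R (A *v eta) + (eta \<bullet> d) *\<^sub>R (A *v xi)" for xi eta
  proof -
    have "A *v Qmap v xi eta = (xi \<bullet> eta) *\<^sub>R (A *v v) - (xi \<bullet> v) *\<^sub>R (A *v eta) - (eta \<bullet> v) *\<^sub>R (A *v xi)"
      unfolding Qmap_def by (simp add: vec.diff matrix_vector_mult_scaleR)
    moreover have "Qmap w (A *v xi) (A *v eta) = ((A *v xi) \<bullet> (A *v eta)) *\<^sub>R w
        - (xi \<bullet> (w v* A)) *\<^sub>R (A *v eta) - (eta \<bullet> (w v* A)) *\<^sub>R (A *v xi)"
      unfolding Qmap_def dotT by simp
    ultimately have E: "(xi \<bullet> eta) *\<^sub>R (A *v v) - (xi \<bullet> v) *\<^sub>R (A *v eta) - (eta \<bullet> v) *\<^sub>R (A *v xi)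
       = ((A *v xi) \<bullet> (A *v eta)) *\<^sub>R w
        - (xi \<bullet> (w v* A)) *\<^sub>R (A *v eta) - (eta \<bullet> (w v* A)) *\<^sub>R (A *v xi)"
      using assms(4) by metis
    have "xi \<bullet> d = xi \<bullet> v - xi \<bullet> (w v* A)" "eta \<bullet> d = eta \<bullet> v - eta \<bullet> (w v* A)"
      unfolding d_def by (simp_all add: inner_diff_right)
    thus ?thesis using E unfolding d_def inner_diff_right scaleR_diff_left
      by (simp add: algebra_simps)
  qed
  show ?thesis
  proof (cases "\<exists>x. x \<noteq> 0 \<and> x \<bullet> d = 0")
    case True
    then obtain x where x0: "x \<noteq> 0" and xd: "x \<bullet> d = 0" by blast
    have Ax0: "A *v x \<noteq> 0" using inj0 x0 by blast
    define mu where "mu = ((A *v x) \<bullet> (A *v x)) / (x \<bullet> x)"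
    have mupos: "mu > 0" using x0 Ax0 by (simp add: mu_def)
    have "(x \<bullet> x) *\<^sub>R (A *v v) = ((A *v x) \<bullet> (A *v x)) *\<^sub>R w"
      using H[of x x] xd by simp
    hence Av: "A *v v = mu *\<^sub>R w" using x0 unfolding mu_def by (intro solve_sc) auto
    have H2: "(mu * (xi \<bullet> eta) - (A *v xi) \<bullet> (A *v eta)) *\<^sub>R w
      = (xi \<bullet> d) *\<^sub>R (A *v eta) + (eta \<bullet> d) *\<^sub>R (A *v xi)" for xi eta
      using H[of xi eta] by (simp add: Av algebra_simps)
    have d0: "d = 0"
    proof (rule ccontr)
      assume dn: "d \<noteq> 0"
      have dd: "d \<bullet> d > 0" using dn by simp
      have "(mu * (d \<bullet> d) - (A *v d) \<bullet> (A *v d)) *\<^sub>R w = (d \<bullet> d) *\<^sub>R (A *v d) + (d \<bullet> d) *\<^sub>R (A *v d)"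
        using H2[of d d] by simp
      also have "\<dots> = (2 * (d \<bullet> d)) *\<^sub>R (A *v d)"
        by (metis mult_2 scaleR_left_distrib)
      finally have "(mu * (d \<bullet> d) - (A *v d) \<bullet> (A *v d)) *\<^sub>R w = (2 * (d \<bullet> d)) *\<^sub>R (A *v d)" .
      hence Ad: "A *v d = ((mu * (d \<bullet> d) - (A *v d) \<bullet> (A *v d)) / (2 * (d \<bullet> d))) *\<^sub>R w"
        using dd by (intro solve_sc) auto
      have "(mu * (d \<bullet> x) - (A *v d) \<bullet> (A *v x)) *\<^sub>R w = (d \<bullet> d) *\<^sub>R (A *v x)"
        using H2[of d x] xd by (simp add: inner_commute)
      hence Ax: "A *v x = ((mu * (d \<bullet> x) - (A *v d) \<bullet> (A *v x)) / (d \<bullet> d)) *\<^sub>R w"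
        using dd by (intro solve_sc) auto
      define a where "a = (mu * (d \<bullet> d) - (A *v d) \<bullet> (A *v d)) / (2 * (d \<bullet> d))"
      define b where "b = (mu * (d \<bullet> x) - (A *v d) \<bullet> (A *v x)) / (d \<bullet> d)"
      have "A *v (b *\<^sub>R d - a *\<^sub>R x) = 0"
        using Ad Ax unfolding a_def[symmetric] b_def[symmetric]
        by (simp add: vec.diff matrix_vector_mult_scaleR)
      hence "b *\<^sub>R d - a *\<^sub>R x = 0" using inj0 by blast
      hence "(b *\<^sub>R d - a *\<^sub>R x) \<bullet> d = 0" by simp
      hence "b * (d \<bullet> d) = 0" using xd by (simp add: inner_diff_left)
      hence "b = 0" using dd by simp
      hence "A *v x = 0" using Ax unfolding b_def[symmetric] by simp
      thus False using Ax0 by simp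
    qed
    have "(A *v y) \<bullet> (A *v y) = mu * (y \<bullet> y)" for y
    proof -
      have "(mu * (y \<bullet> y) - (A *v y) \<bullet> (A *v y)) *\<^sub>R w = 0"
        using H2[of y y] d0 by simp
      thus ?thesis using assms(2) by simp
    qed
    thus ?thesis using norm_scale_orth mupos by blast
  next
    case False
    have dn: "d \<noteq> 0" using False
      by (metis inner_zero_right axis_nth zero_neq_one vec_eq_iff zero_index)
    have dd: "d \<bullet> d > 0" using dn by simp
    define mu where "mu = ((A *v d) \<bullet> (A *v d)) / (d \<bullet> d)"
    have Ad0: "A *v d \<noteq> 0" using inj0 dn by blast
    have mupos: "mu > 0" using dn Ad0 by (simp add: mu_def)
    have "(A *v y) \<bullet> (A *v y) = mu * (y \<bullet> y)" for y
    proof -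
      define t where "t = (y \<bullet> d) / (d \<bullet> d)"
      have "(y - t *\<^sub>R d) \<bullet> d = 0" using dd by (simp add: t_def inner_diff_left)
      hence "y - t *\<^sub>R d = 0" using False by blast
      hence "y = t *\<^sub>R d" by simp
      thus ?thesis using dd by (simp add: mu_def matrix_vector_mult_scaleR)
    qed
    thus ?thesis using norm_scale_orth mupos by blast
  qed
qed

end
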